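(* As $n\to\infty$, $$\frac{\log_2(n)}{E_n(\gamma)}\to 1,$$ where $E_n(\gamma)$ is the average value of $\gamma(t)$ when $t$ is uniformly distributed on $\mathcal{T}_n$.
   Context: $\mathcal{T}_n$ is the set of ordered rooted binary trees (every internal node has exactly two ordered children) with $n$ leaves. A tree is a caterpillar if every node is either a leaf or has at least one leaf among its direct children. The subtree of $t$ at a node $v$ consists of $v$ and all its descendants, and $\gamma(t)$ is the largest number of leaves of a caterpillar occurring as the subtree of $t$ at some node. *)

theory Defs
  imports Complex_Main
begin

datatype btree = Leaf | Node btree btree

fun leaves :: "btree \<Rightarrow> nat" where
  "leaves Leaf = 1"
| "leaves (Node l r) = leaves l + leaves r"

definition trees :: "nat \<Rightarrow> btree set" where
  "trees n = {t. leaves t = n}"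

fun caterpillar :: "btree \<Rightarrow> bool" where
  "caterpillar Leaf = True"
| "caterpillar (Node l r) = ((l = Leaf \<or> r = Leaf) \<and> caterpillar l \<and> caterpillar r)"

fun subtrees :: "btree \<Rightarrow> btree set" where
  "subtrees Leaf = {Leaf}"
| "subtrees (Node l r) = insert (Node l r) (subtrees l \<union> subtrees r)"

definition gamma :: "btree \<Rightarrow> nat" where
  "gamma t = Max (leaves ` {s \<in> subtrees t. caterpillar s})"

definition E_gamma :: "nat \<Rightarrow> real" where
  "E_gamma n = (\<Sum>t\<in>trees n. real (gamma t)) / real (card (trees n))"

end

theory Submission
  imports Defs "HOL-Computational_Algebra.Formal_Power_Series" "HOL-Real_Asymp.Real_Asymp"
begin
unbundle fps_syntax

lemma leaves_pos: "leaves t \<ge> 1"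
  by (induction t) auto

lemma trees_0: "trees 0 = {}"
  using leaves_pos by (auto simp: trees_def) (metis Suc_le_eq)

lemma trees_1: "trees 1 = {Leaf}"
proof -
  have "leaves t = 1 \<Longrightarrow> t = Leaf" for t
  proof (cases t)
    case (Node l r)
    assume "leaves t = 1"
    then show ?thesis using Node leaves_pos[of l] leaves_pos[of r] by simp
  qed simp
  then show ?thesis by (auto simp: trees_def)
qed

definition NS :: "nat \<Rightarrow> (nat \<times> btree \<times> btree) set" where
  "NS n = (SIGMA i:{0..n}. trees i \<times> trees (n - i))"

lemma trees_decomp:
  "trees n = (if n = 1 then {Leaf} else {}) \<union> (\<lambda>(i,l,r). Node l r) ` NS n"
proof (intro set_eqI iffI)
  fix t assume "t \<in> trees n"
  then show "t \<in> (if n = 1 then {Leaf} else {}) \<union> (\<lambda>(i,l,r). Node l r) ` NS n"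
  proof (cases t)
    case (Node l r)
    then have "(leaves l, l, r) \<in> NS n" using \<open>t \<in> trees n\<close> by (auto simp: NS_def trees_def)
    then show ?thesis using Node by force
  qed (auto simp: trees_def)
next
  fix t assume "t \<in> (if n = 1 then {Leaf} else {}) \<union> (\<lambda>(i,l,r). Node l r) ` NS n"
  then show "t \<in> trees n" by (auto simp: NS_def trees_def split: if_splits)
qed

lemma finite_trees: "finite (trees n)"
proof (induction n rule: less_induct)
  case (less n)
  have "finite (NS n)" unfolding NS_def
  proof (rule finite_SigmaI)
    fix i assume i: "i \<in> {0..n}"
    show "finite (trees i \<times> trees (n - i))"
    proof (cases "i = 0 \<or> i = n")
      case True then show ?thesis using trees_0 by auto
    next
      case False then show ?thesis using less i by auto
    qed
  qed simp
  then show ?case by (subst trees_decomp) auto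
qed

lemma inj_NS: "inj_on (\<lambda>(i,l,r). Node l r) (NS n)"
  by (auto simp: inj_on_def NS_def trees_def)

lemma sum_trees:
  "(\<Sum>t\<in>trees n. f t) = (if n = 1 then f Leaf else 0) +
     (\<Sum>i=0..n. \<Sum>l\<in>trees i. \<Sum>r\<in>trees (n - i). f (Node l r))"
proof -
  have fin: "finite (NS n)" using finite_trees by (auto simp: NS_def)
  have "(\<Sum>t\<in>trees n. f t) = (\<Sum>t\<in>(if n = 1 then {Leaf} else {}). f t) +
      (\<Sum>t\<in>(\<lambda>(i,l,r). Node l r) ` NS n. f t)"
    by (subst trees_decomp, rule sum.union_disjoint) (use fin in auto)
  also have "(\<Sum>t\<in>(\<lambda>(i,l,r). Node l r) ` NS n. f t) = (\<Sum>(i,l,r)\<in>NS n. f (Node l r))"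
    by (subst sum.reindex[OF inj_NS]) (simp add: case_prod_beta)
  also have "\<dots> = (\<Sum>i=0..n. \<Sum>(l,r)\<in>trees i \<times> trees (n - i). f (Node l r))"
    unfolding NS_def by (subst sum.Sigma) (auto simp: finite_trees)
  also have "\<dots> = (\<Sum>i=0..n. \<Sum>l\<in>trees i. \<Sum>r\<in>trees (n - i). f (Node l r))"
    by (simp add: sum.cartesian_product finite_trees)
  finally show ?thesis by simp
qed


definition S :: "(btree \<Rightarrow> real) \<Rightarrow> real fps" where
  "S f = Abs_fps (\<lambda>n. \<Sum>t\<in>trees n. f t)"

definition S2 :: "(btree \<Rightarrow> btree \<Rightarrow> real) \<Rightarrow> real fps" where
  "S2 g = Abs_fps (\<lambda>n. \<Sum>i=0..n. \<Sum>l\<in>trees i. \<Sum>r\<in>trees (n - i). g l r)"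

lemma S_nth: "S f $ n = (\<Sum>t\<in>trees n. f t)"
  by (simp add: S_def)

lemma S_decomp: "S f = fps_const (f Leaf) * fps_X + S2 (\<lambda>l r. f (Node l r))"
  unfolding S_def S2_def by (rule fps_ext) (subst sum_trees, simp add: fps_mult_left_const_nth)

lemma S2_prod: "S2 (\<lambda>l r. a l * b r) = S a * S b"
  by (rule fps_ext) (simp add: S_def S2_def fps_mult_nth sum_product)

lemma S2_add: "S2 (\<lambda>l r. g l r + h l r) = S2 g + S2 h"
  by (rule fps_ext) (simp add: S2_def sum.distrib)

lemma S2_cmult: "S2 (\<lambda>l r. c * g l r) = fps_const c * S2 g"
  by (rule fps_ext) (simp add: S2_def sum_distrib_left fps_mult_left_const_nth)

definition ind :: "nat \<Rightarrow> btree \<Rightarrow> nat" where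
  "ind k t = (if caterpillar t \<and> leaves t = k then 1 else 0)"

fun cnt :: "nat \<Rightarrow> btree \<Rightarrow> nat" where
  "cnt k Leaf = ind k Leaf"
| "cnt k (Node l r) = ind k (Node l r) + cnt k l + cnt k r"

lemma cnt_small: "leaves t < k \<Longrightarrow> cnt k t = 0"
  by (induction t) (auto simp: ind_def)

lemma ind_Node: "ind k (Node l r) \<noteq> 0 \<Longrightarrow> leaves l < k \<and> leaves r < k"
  using leaves_pos[of l] leaves_pos[of r] by (auto simp: ind_def split: if_splits)

definition catn :: "nat \<Rightarrow> nat" where
  "catn k = card {t \<in> trees k. caterpillar t}"

lemma S_ind: "S (\<lambda>t. real (ind k t)) = fps_const (real (catn k)) * fps_X ^ k"
proof (rule fps_ext)
  fix n
  show "S (\<lambda>t. real (ind k t)) $ n = (fps_const (real (catn k)) * fps_X ^ k) $ n"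
  proof (cases "n = k")
    case True
    have "(\<Sum>t\<in>trees n. real (ind k t)) = (\<Sum>t\<in>trees n. if caterpillar t then 1 else 0)"
      using True by (intro sum.cong) (auto simp: ind_def trees_def)
    also have "\<dots> = real (catn k)"
      using True finite_trees by (simp add: sum.If_cases catn_def Int_def)
    finally show ?thesis using True by (simp add: S_nth fps_mult_left_const_nth fps_X_power_nth)
  next
    case False
    have "(\<Sum>t\<in>trees n. real (ind k t)) = 0"
      using False by (intro sum.neutral) (auto simp: ind_def trees_def)
    then show ?thesis using False by (simp add: S_nth fps_mult_left_const_nth fps_X_power_nth)
  qed
qed

abbreviation "Cf \<equiv> S (\<lambda>_. 1)"
abbreviation "G \<equiv> S (\<lambda>t. real (leaves t))"
abbreviation "D \<equiv> S (\<lambda>t. real (leaves t) * (real (leaves t) - 1))"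
abbreviation "F k \<equiv> S (\<lambda>t. real (cnt k t))"
abbreviation "H k \<equiv> S (\<lambda>t. real (cnt k t) ^ 2)"

lemma Cf_eq: "Cf = fps_X + Cf * Cf"
proof -
  have "Cf = fps_X + S2 (\<lambda>l r. 1 * 1)"
    by (subst S_decomp) simp
  then show ?thesis by (simp only: S2_prod)
qed

lemma G_eq: "G = fps_X + G * Cf + Cf * G"
proof -
  have "G = fps_X + S2 (\<lambda>l r. real (leaves l) * 1 + 1 * real (leaves r))"
    by (subst S_decomp) simp
  then show ?thesis by (simp only: S2_prod S2_add add.assoc)
qed

lemma D_eq: "D = D * Cf + Cf * D + 2 * G * G"
proof -
  have "D = S2 (\<lambda>l r. real (leaves l) * (real (leaves l) - 1) * 1 + 1 * (real (leaves r) * (real (leaves r) - 1))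
     + 2 * (real (leaves l) * real (leaves r)))"
    by (subst S_decomp) (simp add: algebra_simps)
  then show ?thesis by (simp only: S2_prod S2_add S2_cmult add.assoc) (simp add: numeral_fps_const mult.assoc)
qed

lemma F_eq: "F k = S (\<lambda>t. real (ind k t)) + F k * Cf + Cf * F k"
proof -
  have "F k = fps_const (real (ind k Leaf)) * fps_X + S2 (\<lambda>l r. real (ind k (Node l r))
      + (real (cnt k l) * 1 + 1 * real (cnt k r)))"
    by (subst S_decomp) (simp add: algebra_simps)
  also have "\<dots> = S (\<lambda>t. real (ind k t)) + F k * Cf + Cf * F k"
    by (simp only: S2_prod S2_add add.assoc S_decomp[of "\<lambda>t. real (ind k t)"])
  finally show ?thesis .
qed

lemma cnt_sq_Node: "real (cnt k (Node l r)) ^ 2 = real (ind k (Node l r)) + 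
   (real (cnt k l) ^ 2 * 1 + 1 * real (cnt k r) ^ 2 + 2 * (real (cnt k l) * real (cnt k r)))"
proof (cases "ind k (Node l r) = 0")
  case True then show ?thesis by (simp add: power2_eq_square algebra_simps)
next
  case False
  then have "ind k (Node l r) = 1" by (simp add: ind_def split: if_splits)
  moreover have "cnt k l = 0" "cnt k r = 0" using ind_Node[OF False] cnt_small by auto
  ultimately show ?thesis by simp
qed

lemma cnt_Leaf_sq: "real (cnt k Leaf) ^ 2 = real (ind k Leaf)"
  by (auto simp: ind_def)

lemma H_eq: "H k = S (\<lambda>t. real (ind k t)) + H k * Cf + Cf * H k + 2 * F k * F k"
proof -
  have "H k = fps_const (real (ind k Leaf)) * fps_X + S2 (\<lambda>l r. real (ind k (Node l r)) + 
   (real (cnt k l) ^ 2 * 1 + 1 * real (cnt k r) ^ 2 + 2 * (real (cnt k l) * real (cnt k r))))"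
    apply (subst S_decomp) by (simp only: cnt_sq_Node cnt_Leaf_sq)
  also have "\<dots> = S (\<lambda>t. real (ind k t)) + H k * Cf + Cf * H k + 2 * F k * F k"
    by (simp only: S2_prod S2_add S2_cmult add.assoc S_decomp[of "\<lambda>t. real (ind k t)"])
       (simp add: numeral_fps_const mult.assoc)
  finally show ?thesis .
qed


lemma r1: "(g::real fps) = x + g*c + c*g \<Longrightarrow> g*(1-2*c) = x" by algebra
lemma r2: "(c::real fps) = x + c*c \<Longrightarrow> (1-2*c)*(1-2*c) = 1 - 4*x" by algebra
lemma r3: "(d::real fps) = d*c + c*d + 2*g*g \<Longrightarrow> d*(1-2*c) = 2*g*g" by algebra
lemma r4: "(f::real fps) = s + f*c + c*f \<Longrightarrow> f*(1-2*c) = s" by algebra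
lemma r5: "(h::real fps) = s + h*c + c*h + 2*f*f \<Longrightarrow> h*(1-2*c) = s + 2*f*f" by algebra

abbreviation "A \<equiv> 1 - 2 * Cf"

lemma Cf_0: "Cf $ 0 = 0"
  by (simp add: S_nth trees_0)

lemma A_nz: "A \<noteq> 0"
proof
  assume "A = 0"
  then have "A $ 0 = 0" by simp
  then show False using Cf_0 by (simp add: numeral_fps_const)
qed

lemma GA: "G * A = fps_X" by (rule r1[OF G_eq])
lemma AA: "A * A = 1 - 4 * fps_X" by (rule r2[OF Cf_eq])
lemma DA: "D * A = 2 * G * G" by (rule r3[OF D_eq])
lemma FA: "F k * A = fps_const (real (catn k)) * fps_X ^ k"
  using r4[OF F_eq[of k]] by (simp add: S_ind)
lemma HA: "H k * A = fps_const (real (catn k)) * fps_X ^ k + 2 * F k * F k"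
  using r5[OF H_eq[of k]] by (simp add: S_ind)

lemma F_closed:
  assumes "k \<ge> 1"
  shows "F k = fps_const (real (catn k)) * fps_X ^ (k - 1) * G"
proof -
  have "fps_X ^ k = fps_X ^ (k - 1) * (fps_X :: real fps)"
  proof -
    obtain m where "k = Suc m" using assms by (cases k) auto
    then show ?thesis by (simp only: power_Suc2 diff_Suc_1)
  qed
  then have "F k * A = fps_const (real (catn k)) * (fps_X ^ (k - 1) * (G * A))"
    by (simp only: FA GA mult.assoc)
  then have "F k * A = (fps_const (real (catn k)) * fps_X ^ (k - 1) * G) * A"
    by (simp only: mult.assoc)
  then show ?thesis using A_nz by (rule mult_right_cancel[THEN iffD1, rotated])
qed

lemma r6:
  assumes "(h::real fps)*a = c*y + 2*f*f" "f*a = c*y" "f = c*z*g" "d*a = 2*g*g"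
  shows "h * a = (f + c*c*(z*z)*d)*a"
proof -
  have "(f + c*c*(z*z)*d)*a = f*a + c*c*(z*z)*(d*a)" by (simp add: algebra_simps)
  also have "\<dots> = c*y + c*c*(z*z)*(2*g*g)" by (simp only: assms(2) assms(4))
  also have "\<dots> = c*y + 2*f*f" by (simp add: assms(3) algebra_simps)
  finally show ?thesis using assms(1) by simp
qed

lemma H_closed:
  assumes "k \<ge> 1"
  shows "H k = F k + fps_const (real (catn k) ^ 2) * fps_X ^ (2 * k - 2) * D"
proof -
  have x: "fps_X ^ (2 * k - 2) = fps_X ^ (k - 1) * (fps_X ^ (k - 1) :: real fps)"
  proof -
    have e: "2 * k - 2 = (k - 1) + (k - 1)" using assms by simp
    show ?thesis by (simp only: e power_add)
  qed
  have y: "fps_const (real (catn k) ^ 2) = fps_const (real (catn k)) * fps_const (real (catn k))"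
    by (simp add: power2_eq_square)
  have "H k * A = (F k + fps_const (real (catn k)) * fps_const (real (catn k)) * (fps_X ^ (k - 1) * fps_X ^ (k - 1)) * D) * A"
    by (rule r6[OF HA FA F_closed[OF assms] DA])
  then have "H k = F k + fps_const (real (catn k)) * fps_const (real (catn k)) * (fps_X ^ (k - 1) * fps_X ^ (k - 1)) * D"
    using A_nz by (rule mult_right_cancel[THEN iffD1, rotated])
  then show ?thesis by (simp only: x y)
qed

definition C :: "nat \<Rightarrow> real" where "C n = real (card (trees n))"

lemma Cf_nth: "Cf $ n = C n" by (simp add: S_nth C_def)

lemma G_nth: "G $ n = real n * C n"
proof -
  have "G $ n = (\<Sum>t\<in>trees n. real n)" unfolding S_nth by (intro sum.cong) (auto simp: trees_def)
  then show ?thesis by (simp add: C_def)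
qed

lemma D_nth: "D $ n = real n * (real n - 1) * C n"
proof -
  have "D $ n = (\<Sum>t\<in>trees n. real n * (real n - 1))" unfolding S_nth by (intro sum.cong) (auto simp: trees_def)
  then show ?thesis by (simp add: C_def)
qed

lemma r7: assumes "(g::real fps)*a = x" "a*a = 1 - 4*x" "a = 1 - 2*c"
  shows "g - 4*(x*g) = x - 2*(x*c)"
proof -
  have "g*(a*a) = g*(1 - 4*x)" using assms(2) by simp
  then have "g - 4*(x*g) = g*(a*a)" by (simp add: algebra_simps)
  also have "\<dots> = x * a" using assms(1) by (metis mult.assoc mult.commute)
  finally show ?thesis using assms(3) by (simp add: algebra_simps)
qed

lemma C_rec:
  assumes "n \<ge> 2"
  shows "real n * C n = (4 * real n - 6) * C (n - 1)"
proof -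
  have "G - 4 * (fps_X * G) = fps_X - 2 * (fps_X * Cf)" by (rule r7[OF GA AA refl])
  then have "(G - 4 * (fps_X * G)) $ n = (fps_X - 2 * (fps_X * Cf)) $ n" by simp
  then have "G $ n - 4 * G $ (n - 1) = - 2 * Cf $ (n - 1)" using assms
    by (simp add: numeral_fps_const fps_mult_left_const_nth)
  then have "real n * C n - 4 * (real (n - 1) * C (n - 1)) = - 2 * C (n - 1)"
    by (simp add: G_nth Cf_nth)
  then show ?thesis using assms by (simp add: of_nat_diff algebra_simps)
qed

lemma C_1: "C 1 = 1" unfolding C_def trees_1 by simp


lemma Leaf_sub: "Leaf \<in> subtrees t" by (induction t) auto
lemma self_sub: "t \<in> subtrees t" by (cases t) auto
lemma finite_sub: "finite (subtrees t)" by (induction t) auto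
lemma sub_leaves: "s \<in> subtrees t \<Longrightarrow> leaves s \<le> leaves t"
  by (induction t) auto
lemma sub_trans: "s \<in> subtrees t \<Longrightarrow> u \<in> subtrees s \<Longrightarrow> u \<in> subtrees t"
  by (induction t) (auto simp: self_sub)

lemma cat_sub:
  "caterpillar s \<Longrightarrow> 1 \<le> j \<Longrightarrow> j \<le> leaves s \<Longrightarrow> \<exists>u\<in>subtrees s. caterpillar u \<and> leaves u = j"
proof (induction s)
  case Leaf then show ?case by auto
next
  case (Node l r)
  show ?case
  proof (cases "j = leaves (Node l r)")
    case True then show ?thesis using Node.prems self_sub by blast
  next
    case False
    then have "j < leaves (Node l r)" using Node.prems by simp
    then show ?thesis using Node by (auto simp: leaves_pos)
  qed
qed

definition catset :: "btree \<Rightarrow> nat set" where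
  "catset t = leaves ` {s \<in> subtrees t. caterpillar s}"

lemma catset_fin: "finite (catset t)" by (simp add: catset_def finite_sub)
lemma catset_ne: "1 \<in> catset t"
  unfolding catset_def using Leaf_sub by force

lemma gamma_in: "gamma t \<in> catset t"
  unfolding gamma_def catset_def[symmetric] using catset_fin catset_ne Max_in by blast

lemma gamma_ge: "j \<in> catset t \<Longrightarrow> j \<le> gamma t"
  unfolding gamma_def catset_def[symmetric] using catset_fin by simp

lemma gamma_le: "gamma t \<le> leaves t"
  using gamma_in[of t] by (auto simp: catset_def sub_leaves)

lemma gamma_pos: "1 \<le> gamma t"
  using gamma_ge catset_ne by blast

lemma cnt_pos: "cnt k t > 0 \<longleftrightarrow> (\<exists>s\<in>subtrees t. caterpillar s \<and> leaves s = k)"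
  by (induction t) (auto simp: ind_def)

lemma cnt_pos_gamma: "1 \<le> j \<Longrightarrow> j \<le> gamma t \<Longrightarrow> cnt j t > 0"
proof -
  assume j: "1 \<le> j" "j \<le> gamma t"
  obtain s where s: "s \<in> subtrees t" "caterpillar s" "leaves s = gamma t"
    using gamma_in[of t] by (auto simp: catset_def)
  have "j \<le> leaves s" using s(3) j(2) by simp
  then obtain u where u: "u \<in> subtrees s" "caterpillar u" "leaves u = j"
    using cat_sub[OF s(2) j(1)] by blast
  have "u \<in> subtrees t" by (rule sub_trans[OF s(1) u(1)])
  then show ?thesis using u(2,3) unfolding cnt_pos by blast
qed

lemma gamma_cnt: "cnt j t > 0 \<Longrightarrow> j \<le> gamma t"
proof -
  assume "cnt j t > 0"
  then obtain s where "s \<in> subtrees t" "caterpillar s" "leaves s = j" unfolding cnt_pos by blast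
  then have "j \<in> catset t" unfolding catset_def by blast
  then show ?thesis by (rule gamma_ge)
qed

lemma cat_set_Suc:
  assumes "j \<ge> 1"
  shows "{t \<in> trees (Suc j). caterpillar t} =
     Node Leaf ` {t \<in> trees j. caterpillar t} \<union> (\<lambda>s. Node s Leaf) ` {t \<in> trees j. caterpillar t}"
proof (intro set_eqI iffI)
  fix t assume "t \<in> {t \<in> trees (Suc j). caterpillar t}"
  then show "t \<in> Node Leaf ` {t \<in> trees j. caterpillar t} \<union> (\<lambda>s. Node s Leaf) ` {t \<in> trees j. caterpillar t}"
    using assms by (cases t) (auto simp: trees_def)
qed (auto simp: trees_def)

lemma catn_1: "catn 1 = 1"
proof -
  have "{t \<in> trees 1. caterpillar t} = {Leaf}" unfolding trees_1 by auto
  then show ?thesis unfolding catn_def by simp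
qed

lemma catn_Suc:
  assumes "j \<ge> 2"
  shows "catn (Suc j) = 2 * catn j"
proof -
  let ?X = "{t \<in> trees j. caterpillar t}"
  have fin: "finite ?X" using finite_trees by simp
  have disj: "Node Leaf ` ?X \<inter> (\<lambda>s. Node s Leaf) ` ?X = {}"
    using assms by (auto simp: trees_def)
  have "catn (Suc j) = card (Node Leaf ` ?X) + card ((\<lambda>s. Node s Leaf) ` ?X)"
    unfolding catn_def using assms by (subst cat_set_Suc) (auto intro!: card_Un_disjoint fin disj)
  also have "\<dots> = 2 * catn j"
    by (subst card_image, simp add: inj_on_def)+ (simp add: catn_def)
  finally show ?thesis .
qed

lemma catn_2: "catn (Suc (Suc 0)) = 1"
proof -
  have "{t \<in> trees (Suc 1). caterpillar t} = Node Leaf ` {t \<in> trees 1. caterpillar t} \<union> (\<lambda>s. Node s Leaf) ` {t \<in> trees 1. caterpillar t}"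
    by (rule cat_set_Suc) simp
  also have "{t \<in> trees 1. caterpillar t} = {Leaf}" unfolding trees_1 by auto
  finally have "{t \<in> trees (Suc 1). caterpillar t} = {Node Leaf Leaf}" by simp
  then show ?thesis unfolding catn_def by simp
qed

lemma catn_eq0: "catn (Suc (Suc m)) = 2 ^ m"
proof (induction m)
  case 0 then show ?case using catn_2 by simp
next
  case (Suc m)
  have "catn (Suc (Suc (Suc m))) = 2 * catn (Suc (Suc m))" by (rule catn_Suc) simp
  then show ?case using Suc by simp
qed

lemma catn_eq: assumes "j \<ge> 2" shows "catn j = 2 ^ (j - 2)"
proof -
  have "Suc (Suc (j - 2)) = j" using assms by simp
  then show ?thesis using catn_eq0[of "j - 2"] by simp
qed

lemma catn_le: "j \<ge> 1 \<Longrightarrow> catn j \<le> 2 ^ j"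
proof -
  assume "j \<ge> 1"
  then consider "j = 1" | "j \<ge> 2" by linarith
  then show ?thesis
  proof cases
    case 1 then show ?thesis using catn_1 by simp
  next
    case 2 then show ?thesis by (simp add: catn_eq)
  qed
qed


lemma C_step: "m \<ge> 2 \<Longrightarrow> C m = (4 - 6 / real m) * C (m - 1)"
  using C_rec[of m] by (simp add: field_simps)

lemma C_pos: "m \<ge> 1 \<Longrightarrow> C m > 0"
proof (induction m rule: dec_induct)
  case base then show ?case using C_1 by simp
next
  case (step m)
  have "(4 - 6 / real (Suc m)) > 0" using step(1) by (simp add: field_simps)
  then show ?case using C_step[of "Suc m"] step by simp
qed

lemma C_up: "m \<ge> 1 \<Longrightarrow> C (m + i) \<le> 4 ^ i * C m"
proof (induction i)
  case 0 then show ?case by simp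
next
  case (Suc i)
  have "C (m + Suc i) = (4 - 6 / real (m + Suc i)) * C (m + i)"
    using C_step[of "m + Suc i"] Suc by simp
  also have "\<dots> \<le> 4 * C (m + i)"
    using C_pos[of "m + i"] Suc by (intro mult_right_mono) auto
  also have "\<dots> \<le> 4 * (4 ^ i * C m)" using Suc by simp
  finally show ?case by simp
qed

lemma C_low0: "m \<ge> 1 \<Longrightarrow> C (m + i) \<ge> (4 - 6 / real (m + 1)) ^ i * C m"
proof (induction i)
  case 0 then show ?case by simp
next
  case (Suc i)
  have q: "4 - 6 / real (m + 1) \<ge> 0" using Suc by (simp add: field_simps)
  have "(4 - 6 / real (m + 1)) ^ Suc i * C m = (4 - 6 / real (m + 1)) * ((4 - 6 / real (m + 1)) ^ i * C m)"
    by simp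
  also have "\<dots> \<le> (4 - 6 / real (m + 1)) * C (m + i)"
    using Suc q by (intro mult_left_mono) auto
  also have "\<dots> \<le> (4 - 6 / real (m + Suc i)) * C (m + i)"
  proof (rule mult_right_mono)
    show "4 - 6 / real (m + 1) \<le> 4 - 6 / real (m + Suc i)"
      by (simp add: frac_le)
  qed (use C_pos[of "m + i"] Suc in auto)
  also have "\<dots> = C (m + Suc i)"
    using C_step[of "m + Suc i"] Suc by simp
  finally show ?case .
qed

lemma C_low: "m \<ge> 1 \<Longrightarrow> C (m + i) \<ge> 4 ^ i * (1 - 3 * real i / (2 * real (m + 1))) * C m"
proof -
  assume m: "m \<ge> 1"
  have e: "4 - 6 / real (m + 1) = 4 * (1 + (- 3 / (2 * real (m + 1))))" by (simp add: field_simps)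
  have b: "1 + real i * (- 3 / (2 * real (m + 1))) \<le> (1 + (- 3 / (2 * real (m + 1)))) ^ i"
    by (rule Bernoulli_inequality) (use m in \<open>simp add: field_simps\<close>)
  have "4 ^ i * (1 - 3 * real i / (2 * real (m + 1))) * C m \<le> 4 ^ i * (1 + (- 3 / (2 * real (m + 1)))) ^ i * C m"
    using b C_pos[OF m] by (intro mult_right_mono mult_left_mono) (auto simp: field_simps)
  also have "\<dots> = (4 - 6 / real (m + 1)) ^ i * C m" by (simp only: e power_mult_distrib)
  also have "\<dots> \<le> C (m + i)" by (rule C_low0[OF m])
  finally show ?thesis .
qed

lemma F_nth:
  assumes "k \<ge> 1" "k \<le> n + 1"
  shows "(\<Sum>t\<in>trees n. real (cnt k t)) = real (catn k) * real (n + 1 - k) * C (n + 1 - k)"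
proof -
  have "(\<Sum>t\<in>trees n. real (cnt k t)) = F k $ n" by (simp add: S_nth)
  also have "\<dots> = real (catn k) * (fps_X ^ (k - 1) * G) $ n"
    by (simp only: F_closed[OF assms(1)] mult.assoc fps_mult_left_const_nth)
  also have "\<dots> = real (catn k) * G $ (n + 1 - k)"
    using assms by (simp add: fps_X_power_mult_nth)
  finally show ?thesis by (simp add: G_nth)
qed

lemma H_nth:
  assumes "k \<ge> 1" "2 * k \<le> n + 2"
  shows "(\<Sum>t\<in>trees n. real (cnt k t) ^ 2) = (\<Sum>t\<in>trees n. real (cnt k t))
     + real (catn k) ^ 2 * (real (n + 2 - 2 * k) * (real (n + 2 - 2 * k) - 1) * C (n + 2 - 2 * k))"
proof -
  have "(\<Sum>t\<in>trees n. real (cnt k t) ^ 2) = H k $ n" by (simp add: S_nth)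
  also have "\<dots> = F k $ n + real (catn k) ^ 2 * (fps_X ^ (2 * k - 2) * D) $ n"
    by (simp only: H_closed[OF assms(1)] mult.assoc fps_mult_left_const_nth fps_add_nth)
  also have "\<dots> = F k $ n + real (catn k) ^ 2 * D $ (n + 2 - 2 * k)"
    using assms by (simp add: fps_X_power_mult_nth)
  finally show ?thesis by (simp add: D_nth S_nth)
qed


lemma geom_sum:
  fixes v :: "nat \<Rightarrow> real"
  assumes "\<And>j. a \<le> j \<Longrightarrow> j < b \<Longrightarrow> 3 * v (Suc j) \<le> 2 * v j" "a \<le> b"
  shows "(\<Sum>j\<in>{a..b}. v j) + 2 * v b \<le> 3 * v a"
  using assms(2)
proof (induction b rule: dec_induct)
  case base then show ?case by simp
next
  case (step b)
  have "(\<Sum>j\<in>{a..Suc b}. v j) = (\<Sum>j\<in>{a..b}. v j) + v (Suc b)"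
    using step(1) by (simp add: sum.cl_ivl_Suc)
  moreover have "3 * v (Suc b) \<le> 2 * v b" using assms(1) step by simp
  ultimately show ?case using step.IH by simp
qed

lemma gamma_sum_ind: "gamma t \<le> n \<Longrightarrow> real (gamma t) = (\<Sum>j\<in>{1..n}. if j \<le> gamma t then 1 else 0)"
proof -
  assume "gamma t \<le> n"
  then have "{1..n} \<inter> {j. j \<le> gamma t} = {1..gamma t}" by auto
  then show ?thesis by (simp add: sum.If_cases)
qed

lemma C_nn: "C m \<ge> 0" by (simp add: C_def)

lemma card_trees: "real (card (trees n)) = C n" by (simp add: C_def)

lemma upper_sum:
  assumes n: "n \<ge> 1" and K1: "real n \<le> 2 ^ K" and K2: "4 * K \<le> n + 1"
  shows "(\<Sum>t\<in>trees n. real (gamma t)) \<le> (real K + 17) * C n"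
proof -
  define P where "P j = (if K < j \<and> j + 5 \<le> n then 1 else 0 :: real)" for j
  have Cn: "C n > 0" using C_pos n by simp
  have pt: "(if j \<le> gamma t then 1 else 0) \<le> (if j \<le> K then 1 else 0) + (if n < j + 5 then 1 else 0) + P j * real (cnt j t)"
    if "j \<in> {1..n}" for j t
  proof (cases "j \<le> gamma t \<and> K < j \<and> j + 5 \<le> n")
    case True
    then have "cnt j t > 0" using cnt_pos_gamma that by auto
    then show ?thesis using True by (simp add: P_def)
  next
    case False then show ?thesis by (auto simp: P_def)
  qed
  have "(\<Sum>t\<in>trees n. real (gamma t)) = (\<Sum>t\<in>trees n. \<Sum>j\<in>{1..n}. if j \<le> gamma t then 1 else 0)"
    by (intro sum.cong refl gamma_sum_ind) (use gamma_le in \<open>auto simp: trees_def\<close>)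
  also have "\<dots> \<le> (\<Sum>t\<in>trees n. \<Sum>j\<in>{1..n}. (if j \<le> K then 1 else 0) + (if n < j + 5 then 1 else 0) + P j * real (cnt j t))"
    by (intro sum_mono pt)
  also have "\<dots> = (\<Sum>j\<in>{1..n}. (if j \<le> K then 1 else 0) * C n + (if n < j + 5 then 1 else 0) * C n + P j * (\<Sum>t\<in>trees n. real (cnt j t)))"
    by (subst sum.swap, intro sum.cong refl) (simp add: sum.distrib card_trees sum_distrib_left[symmetric] mult.commute)
  also have "\<dots> = (\<Sum>j\<in>{1..n}. (if j \<le> K then 1 else 0)) * C n + (\<Sum>j\<in>{1..n}. (if n < j + 5 then 1 else 0)) * C n
      + (\<Sum>j\<in>{1..n}. P j * (\<Sum>t\<in>trees n. real (cnt j t)))"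
    by (simp add: sum.distrib sum_distrib_right)
  also have "(\<Sum>j\<in>{1..n}. (if j \<le> K then 1 else 0 :: real)) \<le> real K"
  proof -
    have "(\<Sum>j\<in>{1..n}. (if j \<le> K then 1 else 0 :: real)) = real (card ({1..n} \<inter> {j. j \<le> K}))"
      by (simp add: sum.If_cases)
    also have "card ({1..n} \<inter> {j. j \<le> K}) \<le> card {1..K}" by (intro card_mono) auto
    finally show ?thesis by simp
  qed
  also have "(\<Sum>j\<in>{1..n}. (if n < j + 5 then 1 else 0 :: real)) \<le> 5"
  proof -
    have "(\<Sum>j\<in>{1..n}. (if n < j + 5 then 1 else 0 :: real)) = real (card ({1..n} \<inter> {j. n < j + 5}))"
      by (simp add: sum.If_cases)
    also have "card ({1..n} \<inter> {j. n < j + 5}) \<le> card {n - 4..n}" by (intro card_mono) auto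
    finally show ?thesis by simp
  qed
  also have "(\<Sum>j\<in>{1..n}. P j * (\<Sum>t\<in>trees n. real (cnt j t))) \<le> 12 * C n"
  proof -
    define v where "v j = 2 ^ j * real n * C (n + 1 - j)" for j
    have v_nn: "v j \<ge> 0" for j
      using C_pos[of "n + 1 - j"] by (cases "n + 1 - j \<ge> 1") (auto simp: v_def C_def)
    have trm: "P j * (\<Sum>t\<in>trees n. real (cnt j t)) \<le> P j * v j" if "j \<in> {1..n}" for j
    proof -
      have "(\<Sum>t\<in>trees n. real (cnt j t)) = real (catn j) * real (n + 1 - j) * C (n + 1 - j)"
        using that by (intro F_nth) auto
      also have "\<dots> \<le> 2 ^ j * real n * C (n + 1 - j)"
      proof (intro mult_right_mono mult_mono)
        show "real (catn j) \<le> 2 ^ j" using catn_le[of j] that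
          by (metis atLeastAtMost_iff numeral_power_eq_of_nat_cancel_iff of_nat_le_iff)
      qed (use that C_nn in auto)
      finally show ?thesis unfolding v_def by (intro mult_left_mono) (auto simp: P_def)
    qed
    have "(\<Sum>j\<in>{1..n}. P j * (\<Sum>t\<in>trees n. real (cnt j t))) \<le> (\<Sum>j\<in>{1..n}. P j * v j)"
      by (intro sum_mono trm)
    also have "\<dots> = (\<Sum>j\<in>{K+1..n-5}. v j)"
    proof -
      have "(\<Sum>j\<in>{1..n}. P j * v j) = (\<Sum>j\<in>{1..n}. if K < j \<and> j + 5 \<le> n then v j else 0)"
        by (intro sum.cong) (auto simp: P_def)
      also have "\<dots> = (\<Sum>j\<in>{1..n} \<inter> {j. K < j \<and> j + 5 \<le> n}. v j)"
        by (simp add: sum.If_cases)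
      also have "{1..n} \<inter> {j. K < j \<and> j + 5 \<le> n} = {K+1..n-5}" by auto
      finally show ?thesis .
    qed
    also have "\<dots> \<le> 3 * v (K + 1)"
    proof (cases "K + 1 \<le> n - 5")
      case True
      have "(\<Sum>j\<in>{K+1..n-5}. v j) + 2 * v (n - 5) \<le> 3 * v (K + 1)"
      proof (rule geom_sum[OF _ True])
        fix j assume j: "K + 1 \<le> j" "j < n - 5"
        define m where "m = n + 1 - j"
        have m6: "m \<ge> 6" using j by (simp add: m_def)
        have msuc: "n + 1 - Suc j = m - 1" using j by (simp add: m_def)
        have "C m = (4 - 6 / real m) * C (m - 1)" using C_step m6 by simp
        moreover have "4 - 6 / real m \<ge> 3" using m6 by (simp add: field_simps)
        moreover have "C (m - 1) > 0" using C_pos m6 by simp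
        ultimately have "3 * C (m - 1) \<le> C m" by (metis mult_right_mono less_le_not_le)
        then have "(2 ^ j * real n) * (3 * C (m - 1)) \<le> (2 ^ j * real n) * C m"
          by (intro mult_left_mono) auto
        then have "3 * (2 ^ Suc j * real n * C (m - 1)) \<le> 2 * (2 ^ j * real n * C m)"
          by (simp add: algebra_simps)
        then show "3 * v (Suc j) \<le> 2 * v j" unfolding v_def msuc m_def by simp
      qed
      then show ?thesis using v_nn[of "n - 5"] by simp
    next
      case False then show ?thesis using v_nn[of "K+1"] by simp
    qed
    also have "\<dots> \<le> 12 * C n"
    proof -
      have nK: "n - K \<ge> 1" using K2 n by linarith
      have "C (n - K + K) \<ge> 4 ^ K * (1 - 3 * real K / (2 * real (n - K + 1))) * C (n - K)"
        by (rule C_low[OF nK])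
      moreover have "n - K + K = n" using K2 by simp
      moreover have "1 - 3 * real K / (2 * real (n - K + 1)) \<ge> 1 / 2"
        using K2 nK by (simp add: field_simps of_nat_diff)
      moreover have "C (n - K) > 0" using C_pos nK by simp
      ultimately have "4 ^ K * (1/2) * C (n - K) \<le> C n"
        by (smt (verit) mult_left_mono mult_right_mono zero_le_power)
      then have c1: "C (n - K) * 4 ^ K \<le> 2 * C n" by (simp add: mult.commute)
      have "v (K + 1) = 2 * 2 ^ K * real n * C (n - K)" by (simp add: v_def)
      also have "\<dots> \<le> 2 * 2 ^ K * 2 ^ K * C (n - K)"
        using K1 C_pos[OF nK] by (intro mult_right_mono mult_left_mono) auto
      also have "\<dots> = 2 * (C (n - K) * 4 ^ K)" by (simp add: power_mult_distrib[symmetric])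
      also have "\<dots> \<le> 4 * C n" using c1 by simp
      finally show ?thesis by simp
    qed
    finally show ?thesis .
  qed
  finally show ?thesis using Cn by (simp add: algebra_simps)
qed


lemma CS:
  fixes f g :: "'a \<Rightarrow> real"
  assumes "finite Y"
  shows "(\<Sum>a\<in>Y. f a * g a)^2 \<le> (\<Sum>a\<in>Y. f a ^ 2) * (\<Sum>a\<in>Y. g a ^ 2)"
proof -
  have "0 \<le> (\<Sum>a\<in>Y. \<Sum>b\<in>Y. (f a * g b - f b * g a)^2)" by (intro sum_nonneg) auto
  also have "\<dots> = (\<Sum>a\<in>Y. \<Sum>b\<in>Y. f a ^ 2 * g b ^ 2 + f b ^ 2 * g a ^ 2 - 2 * ((f a * g a) * (f b * g b)))"
    by (intro sum.cong refl) (simp add: power2_eq_square algebra_simps)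
  also have "\<dots> = (\<Sum>a\<in>Y. \<Sum>b\<in>Y. f a ^ 2 * g b ^ 2) + (\<Sum>a\<in>Y. \<Sum>b\<in>Y. f b ^ 2 * g a ^ 2)
      - 2 * (\<Sum>a\<in>Y. \<Sum>b\<in>Y. (f a * g a) * (f b * g b))"
    by (simp add: sum.distrib sum_subtractf sum_distrib_left)
  also have "(\<Sum>a\<in>Y. \<Sum>b\<in>Y. f a ^ 2 * g b ^ 2) = (\<Sum>a\<in>Y. f a ^ 2) * (\<Sum>a\<in>Y. g a ^ 2)"
    by (simp add: sum_product)
  also have "(\<Sum>a\<in>Y. \<Sum>b\<in>Y. f b ^ 2 * g a ^ 2) = (\<Sum>a\<in>Y. g a ^ 2) * (\<Sum>a\<in>Y. f a ^ 2)"
    unfolding sum_product by (simp add: mult.commute)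
  also have "(\<Sum>a\<in>Y. \<Sum>b\<in>Y. (f a * g a) * (f b * g b)) = (\<Sum>a\<in>Y. f a * g a)^2"
    by (simp add: sum_product power2_eq_square)
  finally show ?thesis by simp
qed

lemma lower_count:
  assumes k: "k \<ge> 2" and n: "4 * k \<le> n"
  defines "a \<equiv> n + 1 - k" and "b \<equiv> n + 2 - 2 * k"
  defines "q \<equiv> 1 - 3 * real (k - 1) / (2 * real (b + 1))"
  shows "C n \<le> real (card {t \<in> trees n. cnt k t > 0}) * (2 ^ k / real a + 1 / q)"
proof -
  have a1: "a \<ge> 1" and b1: "b \<ge> 1" using k n by (auto simp: a_def b_def)
  have na: "n = a + (k - 1)" and ab: "a = b + (k - 1)" using k n by (auto simp: a_def b_def)
  have qpos: "q > 0" using k n by (simp add: q_def b_def field_simps of_nat_diff)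
  have Ca: "C a > 0" using C_pos a1 by simp
  have Cb: "C b > 0" using C_pos b1 by simp
  have Cn: "C n > 0" using C_pos n k by simp
  define c :: real where "c = 2 ^ (k - 2)"
  have c: "real (catn k) = c" using catn_eq[OF k] by (simp add: c_def)
  have cpos: "c > 0" by (simp add: c_def)
  have ck: "c * 2 ^ k = 4 ^ (k - 1)"
  proof -
    have "c * 2 ^ k = 2 ^ (k - 2 + k)" by (simp add: c_def power_add)
    also have "k - 2 + k = 2 * (k - 1)" using k by simp
    finally show ?thesis by (simp add: power_mult)
  qed
  define FF where "FF = (\<Sum>t\<in>trees n. real (cnt k t))"
  define HH where "HH = (\<Sum>t\<in>trees n. real (cnt k t) ^ 2)"
  define N where "N = real (card {t \<in> trees n. cnt k t > 0})"
  have FF: "FF = c * real a * C a"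
    unfolding FF_def using F_nth[of k n] k n by (simp add: c a_def)
  have HH: "HH = FF + c ^ 2 * (real b * (real b - 1) * C b)"
    unfolding HH_def FF_def using H_nth[of k n] k n by (simp add: c b_def)
  have Fpos: "FF > 0" using FF cpos a1 Ca by simp
  have CSi: "FF ^ 2 \<le> N * HH"
  proof -
    have "FF ^ 2 = (\<Sum>t\<in>trees n. (if cnt k t > 0 then 1 else 0) * real (cnt k t)) ^ 2"
      unfolding FF_def by (intro arg_cong[where f="\<lambda>x. x^2"] sum.cong) auto
    also have "\<dots> \<le> (\<Sum>t\<in>trees n. (if cnt k t > 0 then 1 else 0 :: real) ^ 2) * HH"
      unfolding HH_def by (rule CS[OF finite_trees])
    also have "(\<Sum>t\<in>trees n. (if cnt k t > 0 then 1 else 0 :: real) ^ 2) = N"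
    proof -
      have "(\<Sum>t\<in>trees n. (if cnt k t > 0 then 1 else 0 :: real) ^ 2) = (\<Sum>t\<in>trees n. if cnt k t > 0 then 1 else 0)"
        by (intro sum.cong) auto
      also have "\<dots> = N" unfolding N_def using finite_trees by (simp add: sum.If_cases Int_def)
      finally show ?thesis .
    qed
    finally show ?thesis .
  qed
  have up: "C n \<le> 4 ^ (k - 1) * C a" using C_up[OF a1, of "k - 1"] na by simp
  have lo: "4 ^ (k - 1) * q * C b \<le> C a"
    using C_low[OF b1, of "k - 1"] ab by (simp add: q_def)
  have t1: "C n * FF \<le> FF ^ 2 * (2 ^ k / real a)"
  proof -
    have "FF * (2 ^ k / real a) = c * 2 ^ k * C a" using FF a1 by (simp add: field_simps)
    then have "C n \<le> FF * (2 ^ k / real a)" using up ck by simp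
    then have "C n * FF \<le> (FF * (2 ^ k / real a)) * FF" using Fpos by (intro mult_right_mono) auto
    then show ?thesis by (simp add: power2_eq_square algebra_simps)
  qed
  have t2: "C n * (c ^ 2 * (real b * (real b - 1) * C b)) \<le> FF ^ 2 / q"
  proof -
    have bb: "real b * (real b - 1) \<le> real a ^ 2"
    proof -
      have "real b \<le> real a" using ab by simp
      then have "real b * real b \<le> real a * real a" by (intro mult_mono) auto
      moreover have "real b * (real b - 1) \<le> real b * real b" by (simp add: algebra_simps)
      ultimately show ?thesis by (simp add: power2_eq_square)
    qed
    have "C n * q * C b \<le> 4 ^ (k - 1) * C a * q * C b"
      using up qpos Cb by (intro mult_right_mono) auto
    also have "\<dots> = C a * (4 ^ (k - 1) * q * C b)" by (simp add: algebra_simps)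
    also have "\<dots> \<le> C a * C a" using lo Ca by (intro mult_left_mono) auto
    finally have e1: "C n * q * C b \<le> C a * C a" .
    have "C n * (c ^ 2 * (real b * (real b - 1) * C b)) * q = c ^ 2 * (real b * (real b - 1)) * (C n * q * C b)"
      by (simp add: algebra_simps)
    also have "\<dots> \<le> c ^ 2 * real a ^ 2 * (C a * C a)"
    proof -
      have "(real b * (real b - 1)) * (C n * q * C b) \<le> real a ^ 2 * (C a * C a)"
        by (rule mult_mono[OF bb e1]) (use Cn qpos Cb in auto)
      then show ?thesis using mult_left_mono[of _ _ "c^2"] by (simp add: mult.assoc)
    qed
    also have "\<dots> = FF ^ 2" by (simp add: FF power2_eq_square algebra_simps)
    finally show ?thesis using qpos by (simp add: field_simps)
  qed
  have "C n * HH \<le> FF ^ 2 * (2 ^ k / real a + 1 / q)"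
    using t1 t2 unfolding HH by (simp add: algebra_simps)
  also have "\<dots> \<le> N * HH * (2 ^ k / real a + 1 / q)"
    using CSi qpos a1 by (intro mult_right_mono) auto
  finally have "C n * HH \<le> (N * (2 ^ k / real a + 1 / q)) * HH" by (simp add: algebra_simps)
  moreover have "HH > 0" using HH Fpos cpos Cb b1 by (smt (verit) mult_nonneg_nonneg of_nat_0_le_iff zero_le_power2
        mult_pos_pos of_nat_1 of_nat_le_iff)
  ultimately show ?thesis unfolding N_def by simp
qed

lemma lower_sum:
  assumes k: "k \<ge> 2" and n: "4 * k \<le> n"
  defines "a \<equiv> n + 1 - k" and "b \<equiv> n + 2 - 2 * k"
  defines "q \<equiv> 1 - 3 * real (k - 1) / (2 * real (b + 1))"
  shows "real k * C n \<le> (\<Sum>t\<in>trees n. real (gamma t)) * (2 ^ k / real a + 1 / q)"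
proof -
  have qpos: "q > 0" using k n by (simp add: q_def b_def field_simps of_nat_diff)
  have X: "2 ^ k / real a + 1 / q \<ge> 0" using qpos by simp
  have "real k * real (card {t \<in> trees n. cnt k t > 0}) = (\<Sum>t\<in>{t \<in> trees n. cnt k t > 0}. real k)"
    by simp
  also have "\<dots> \<le> (\<Sum>t\<in>{t \<in> trees n. cnt k t > 0}. real (gamma t))"
    by (intro sum_mono) (auto intro: gamma_cnt)
  also have "\<dots> \<le> (\<Sum>t\<in>trees n. real (gamma t))"
    by (intro sum_mono2 finite_trees) auto
  finally have s: "real k * real (card {t \<in> trees n. cnt k t > 0}) \<le> (\<Sum>t\<in>trees n. real (gamma t))" .
  have "real k * C n \<le> real k * (real (card {t \<in> trees n. cnt k t > 0}) * (2 ^ k / real a + 1 / q))"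
    using lower_count[OF k n] by (intro mult_left_mono) (auto simp: a_def b_def q_def)
  also have "\<dots> \<le> (\<Sum>t\<in>trees n. real (gamma t)) * (2 ^ k / real a + 1 / q)"
    using mult_right_mono[OF s X] by (simp add: algebra_simps)
  finally show ?thesis .
qed


lemma a1: "eventually (\<lambda>n::nat. 4 * (log 2 (real n) + 1) \<le> real n + 1) sequentially"
  by real_asymp
lemma a2: "eventually (\<lambda>n::nat. 6 * log 2 (real n) \<le> real n) sequentially"
  by real_asymp
lemma a3: "filterlim (\<lambda>n::nat. log 2 (real n)) at_top sequentially"
  by real_asymp
lemma a4: "(\<lambda>n::nat. 3 * log 2 (real n) / real n) \<longlonglongrightarrow> 0"
  by real_asymp
lemma a5: "(\<lambda>n::nat. log 2 (real n) / (log 2 (real n) + 18)) \<longlonglongrightarrow> 1"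
  by real_asymp

lemma E_eq: "E_gamma n = (\<Sum>t\<in>trees n. real (gamma t)) / C n"
  by (simp add: E_gamma_def C_def)

lemma E_ge1: assumes "n \<ge> 1" shows "E_gamma n \<ge> 1"
proof -
  have "C n = (\<Sum>t\<in>trees n. 1)" by (simp add: C_def)
  also have "\<dots> \<le> (\<Sum>t\<in>trees n. real (gamma t))" by (intro sum_mono) (use gamma_pos in auto)
  finally show ?thesis using C_pos[OF assms] by (simp add: E_eq)
qed

lemma upper_ev: "eventually (\<lambda>n. E_gamma n \<le> log 2 (real n) + 18) sequentially"
proof -
  have ev: "eventually (\<lambda>n::nat. 4 * (log 2 (real n) + 1) \<le> real n + 1 \<and> n \<ge> 1) sequentially"
    using a1 eventually_ge_at_top[of 1] by eventually_elim auto
  show ?thesis using ev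
  proof eventually_elim
    case (elim n)
    define L where "L = log 2 (real n)"
    have n1: "n \<ge> 1" and h: "4 * (L + 1) \<le> real n + 1" using elim by (auto simp: L_def)
    have L0: "L \<ge> 0" using n1 by (simp add: L_def)
    define K where "K = nat \<lceil>L\<rceil>"
    have K: "real K = of_int \<lceil>L\<rceil>" using L0 by (simp add: K_def)
    have KL: "real K \<le> L + 1" "L \<le> real K" using K by linarith+
    have K2: "4 * K \<le> n + 1"
    proof -
      have "real (4 * K) \<le> real (n + 1)" using KL h by simp
      then show ?thesis by linarith
    qed
    have K1: "real n \<le> 2 ^ K"
    proof -
      have "real n = 2 powr L" using n1 by (simp add: L_def)
      also have "\<dots> \<le> 2 powr (real K)" using KL by simp
      also have "\<dots> = 2 ^ K" by (simp add: powr_realpow)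
      finally show ?thesis .
    qed
    have "(\<Sum>t\<in>trees n. real (gamma t)) \<le> (real K + 17) * C n" by (rule upper_sum[OF n1 K1 K2])
    then have "E_gamma n \<le> real K + 17" using C_pos[OF n1] by (simp add: E_eq divide_simps)
    then show ?case using KL by (simp add: L_def)
  qed
qed

lemma lower_ev:
  assumes e: "0 < \<epsilon>" "\<epsilon> \<le> 1/2"
  shows "eventually (\<lambda>n. E_gamma n \<ge> (1 - 2 * \<epsilon>) * log 2 (real n)) sequentially"
proof -
  define B where "B n = 2 * real n powr (-\<epsilon>) + 1 / (1 - 3 * log 2 (real n) / real n)" for n :: nat
  have p: "(\<lambda>n::nat. real n powr (-\<epsilon>)) \<longlonglongrightarrow> 0"
    by (rule tendsto_neg_powr[OF _ filterlim_real_sequentially]) (use e in simp)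
  have "B \<longlonglongrightarrow> 2 * 0 + 1 / (1 - 0)"
    unfolding B_def by (intro tendsto_intros p a4) simp
  then have "eventually (\<lambda>n. B n < 1 + \<epsilon> / 2) sequentially"
    by (intro order_tendstoD(2)) (use e in auto)
  moreover have "eventually (\<lambda>n. max 4 (2 / \<epsilon>) \<le> log 2 (real n)) sequentially"
  proof -
    have "\<forall>Z. eventually (\<lambda>n. Z \<le> log 2 (real n)) sequentially" using a3 by (simp add: filterlim_at_top)
    then show ?thesis by blast
  qed
  moreover note a2
  moreover have "eventually (\<lambda>n::nat. n \<ge> 1) sequentially" by (rule eventually_ge_at_top)
  ultimately show ?thesis
  proof eventually_elim
    case (elim n)
    define L where "L = log 2 (real n)"
    have n1: "n \<ge> 1" and hB: "B n < 1 + \<epsilon> / 2" and L4: "4 \<le> L" and Le: "2 / \<epsilon> \<le> L"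
      and L6: "6 * L \<le> real n" using elim by (auto simp: L_def)
    have nr: "real n > 0" using n1 by simp
    define y where "y = (1 - \<epsilon>) * L"
    have y2: "y \<ge> 2" using mult_mono[of "1/2" "1-\<epsilon>" 4 L] e L4 by (simp add: y_def)
    have yL: "y \<le> L" using L4 e by (simp add: y_def algebra_simps)
    define k where "k = nat \<lfloor>y\<rfloor>"
    have kr: "real k = of_int \<lfloor>y\<rfloor>" using y2 by (simp add: k_def)
    have ky: "real k \<le> y" "y - 1 \<le> real k" using kr by linarith+
    have k2: "k \<ge> 2" using kr y2 by linarith
    have n4k: "4 * k \<le> n"
    proof -
      have "real (4 * k) \<le> real n" using ky yL L6 L4 by simp
      then show ?thesis by linarith
    qed
    define a where "a = n + 1 - k"
    define b where "b = n + 2 - 2 * k"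
    define q where "q = 1 - 3 * real (k - 1) / (2 * real (b + 1))"
    have ar: "real a \<ge> real n / 2" using n4k ky yL L6 L4 by (simp add: a_def of_nat_diff)
    have br: "real (b + 1) \<ge> real n / 2" using n4k ky yL L6 L4 by (simp add: b_def of_nat_diff)
    have t1: "2 ^ k / real a \<le> 2 * real n powr (-\<epsilon>)"
    proof -
      have "2 ^ k = 2 powr (real k)" by (simp add: powr_realpow)
      also have "\<dots> \<le> 2 powr y" using ky by simp
      also have "2 powr y = (2 powr L) powr (1 - \<epsilon>)" by (simp add: powr_powr y_def mult.commute)
      also have "2 powr L = real n" using nr by (simp add: L_def)
      also have "real n powr (1 - \<epsilon>) = real n * real n powr (-\<epsilon>)"
        using nr powr_add[of "real n" 1 "-\<epsilon>"] by simp
      finally have "2 ^ k \<le> real n * real n powr (-\<epsilon>)" .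
      moreover have "real a > 0" using ar nr by simp
      ultimately have "2 ^ k / real a \<le> real n * real n powr (-\<epsilon>) / real a"
        by (intro divide_right_mono) auto
      also have "\<dots> \<le> real n * real n powr (-\<epsilon>) / (real n / 2)"
        using ar nr by (intro divide_left_mono mult_nonneg_nonneg) auto
      also have "\<dots> = 2 * real n powr (-\<epsilon>)" using nr by simp
      finally show ?thesis .
    qed
    have t2: "1 / q \<le> 1 / (1 - 3 * L / real n)"
    proof -
      have "3 * real (k - 1) / (2 * real (b + 1)) \<le> 3 * L / real n"
      proof -
        have "real (k - 1) \<le> L" using ky yL by (simp add: of_nat_diff)
        moreover have "2 * real (b + 1) \<ge> real n" using br by simp
        ultimately show ?thesis using nr
          by (intro frac_le) auto
      qed
      then have "q \<ge> 1 - 3 * L / real n" by (simp add: q_def)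
      moreover have "1 - 3 * L / real n > 0" using L6 nr by (simp add: field_simps)
      ultimately show ?thesis by (intro divide_left_mono) auto
    qed
    have BL: "B n = 2 * real n powr (-\<epsilon>) + 1 / (1 - 3 * L / real n)" by (simp add: B_def L_def)
    have X: "2 ^ k / real a + 1 / q \<le> 1 + \<epsilon> / 2"
      using t1 t2 hB BL by linarith
    have "real k * C n \<le> (\<Sum>t\<in>trees n. real (gamma t)) * (2 ^ k / real a + 1 / q)"
      unfolding a_def q_def b_def by (rule lower_sum[OF k2 n4k])
    then have "real k * C n / C n \<le> (\<Sum>t\<in>trees n. real (gamma t)) * (2 ^ k / real a + 1 / q) / C n"
      using C_pos[OF n1] by (intro divide_right_mono) auto
    then have "real k \<le> E_gamma n * (2 ^ k / real a + 1 / q)"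
      using C_pos[OF n1] by (simp add: E_eq)
    also have "\<dots> \<le> E_gamma n * (1 + \<epsilon> / 2)"
      using X E_ge1[OF n1] by (intro mult_left_mono) auto
    finally have kE: "real k \<le> E_gamma n * (1 + \<epsilon> / 2)" .
    have eL: "\<epsilon> * L \<ge> 2" using Le e by (simp add: field_simps)
    have "(1 - 2 * \<epsilon>) * L * (1 + \<epsilon> / 2) = (1 - \<epsilon>) * L - (\<epsilon> * L) / 2 - \<epsilon> * (\<epsilon> * L)"
      by (simp add: algebra_simps)
    also have "\<dots> \<le> y - 1"
    proof -
      have "\<epsilon> * (\<epsilon> * L) \<ge> 0" using e eL by simp
      then show ?thesis using eL unfolding y_def by linarith
    qed
    also have "\<dots> \<le> E_gamma n * (1 + \<epsilon> / 2)" using ky kE by linarith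
    finally have "(1 - 2 * \<epsilon>) * L * (1 + \<epsilon> / 2) \<le> E_gamma n * (1 + \<epsilon> / 2)" .
    then show ?case using e by (simp add: L_def)
  qed
qed

theorem corollary4:
  shows "(\<lambda>n. log 2 (real n) / E_gamma n) \<longlonglongrightarrow> 1"
proof (rule order_tendstoI)
  fix a :: real assume a: "a < 1"
  have "eventually (\<lambda>n. a < log 2 (real n) / (log 2 (real n) + 18)) sequentially"
    using order_tendstoD(1)[OF a5 a] .
  moreover note upper_ev
  moreover have "eventually (\<lambda>n::nat. n \<ge> 1) sequentially" by (rule eventually_ge_at_top)
  ultimately show "eventually (\<lambda>n. a < log 2 (real n) / E_gamma n) sequentially"
  proof eventually_elim
    case (elim n)
    have E1: "E_gamma n \<ge> 1" using E_ge1 elim by simp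
    have L0: "log 2 (real n) \<ge> 0" using elim by simp
    have "log 2 (real n) / (log 2 (real n) + 18) \<le> log 2 (real n) / E_gamma n"
      using E1 L0 elim by (intro divide_left_mono) auto
    then show ?case using elim by linarith
  qed
next
  fix a :: real assume a: "1 < a"
  define \<epsilon> where "\<epsilon> = (1 - 1 / a) / 4"
  have e: "0 < \<epsilon>" "\<epsilon> \<le> 1/2" using a by (auto simp: \<epsilon>_def field_simps)
  have ea: "1 / (1 - 2 * \<epsilon>) < a"
  proof -
    have p: "1 - 2 * \<epsilon> = (1 + 1 / a) / 2" by (simp add: \<epsilon>_def field_simps)
    have "a * (1 - 2 * \<epsilon>) = (a + 1) / 2" using a by (simp add: \<epsilon>_def field_simps)
    then have "1 < a * (1 - 2 * \<epsilon>)" using a by simp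
    moreover have "1 - 2 * \<epsilon> > 0" using a by (simp add: \<epsilon>_def field_simps)
    ultimately show ?thesis by (simp add: pos_divide_less_eq mult.commute)
  qed
  have "eventually (\<lambda>n::nat. 1 \<le> log 2 (real n)) sequentially"
    using a3 by (simp add: filterlim_at_top)
  with lower_ev[OF e] show "eventually (\<lambda>n. log 2 (real n) / E_gamma n < a) sequentially"
  proof eventually_elim
    case (elim n)
    define L where "L = log 2 (real n)"
    have L1: "L \<ge> 1" and h: "(1 - 2 * \<epsilon>) * L \<le> E_gamma n" using elim by (auto simp: L_def)
    have p: "1 - 2 * \<epsilon> > 0" using a by (simp add: \<epsilon>_def field_simps)
    have Ep: "(1 - 2 * \<epsilon>) * L > 0" using p L1 by simp
    have "L / E_gamma n \<le> L / ((1 - 2 * \<epsilon>) * L)"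
      using h L1 Ep by (intro divide_left_mono) (auto intro: mult_pos_pos)
    also have "\<dots> = 1 / (1 - 2 * \<epsilon>)" using L1 by simp
    finally show ?case using ea by (simp add: L_def)
  qed
qed


end
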